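(* Let $R>0$, let $K\subset\mathbb{R}^2$ be the closed disk of radius $R$ centered at the origin, and let $f\colon\mathbb{R}\to(0,\infty)$ be a continuously differentiable convex function with $t^2+f(t)^2>R^2$ for all $t$; let $L=\{(t,y)\mid f(t)\le y\}$. Put $$\alpha(t)=\frac{tf'(t)-f(t)}{\sqrt{1+f'(t)^2}}.$$ Then for every point $(x,y)$ with $d((x,y),K)=d((x,y),L)$ there is $t\in\mathbb{R}$ with $\alpha(t)<R$ (namely, $(t,f(t))$ is the point of $L$ nearest to $(x,y)$) such that $$x=t+\frac{f'(t)}{2\sqrt{1+f'(t)^2}}\cdot\frac{t^2+f(t)^2-R^2}{R-\alpha(t)},\qquad y=f(t)-\frac{1}{2\sqrt{1+f'(t)^2}}\cdot\frac{t^2+f(t)^2-R^2}{R-\alpha(t)}.$$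
   Context: $d(p,A)=\inf\{|p-q|\mid q\in A\}$ (Euclidean distance). *)

theory Defs
  imports "HOL-Analysis.Analysis"
begin

end

theory Submission
  imports Defs
begin

theorem theorem5:
  fixes R :: real and f f' :: "real \<Rightarrow> real" and x y :: real
  assumes R_pos: "R > 0"
    and f_pos: "\<And>t. f t > 0"
    and f_deriv: "\<And>t. (f has_real_derivative f' t) (at t)"
    and f'_cont: "continuous_on UNIV f'"
    and f_convex: "convex_on UNIV f"
    and f_outside: "\<And>t. t\<^sup>2 + (f t)\<^sup>2 > R\<^sup>2"
    and equidist: "infdist (x, y) (cball (0::real \<times> real) R) = infdist (x, y) {(t, s). f t \<le> s}"
  shows "\<exists>t. (t * f' t - f t) / sqrt (1 + (f' t)\<^sup>2) < R
           \<and> dist (x, y) (t, f t) = infdist (x, y) {(t, s). f t \<le> s}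
           \<and> x = t + f' t / (2 * sqrt (1 + (f' t)\<^sup>2)) *
                 ((t\<^sup>2 + (f t)\<^sup>2 - R\<^sup>2) / (R - (t * f' t - f t) / sqrt (1 + (f' t)\<^sup>2)))
           \<and> y = f t - 1 / (2 * sqrt (1 + (f' t)\<^sup>2)) *
                 ((t\<^sup>2 + (f t)\<^sup>2 - R\<^sup>2) / (R - (t * f' t - f t) / sqrt (1 + (f' t)\<^sup>2)))"
proof -
  define L where "L = {(t, s). f t \<le> s}"
  define K where "K = cball (0::real \<times> real) R"
  define p where "p = (x, y)"
  have contf: "continuous_on UNIV f"
    using f_deriv by (meson DERIV_isCont continuous_at_imp_continuous_on)
  have Leq: "L = epigraph UNIV f"
    unfolding L_def epigraph_def by auto
  have convL: "convex L" using Leq convex_epigraphI[OF f_convex] by simp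
  have Leq2: "L = {z. f (fst z) \<le> snd z}" unfolding L_def by auto
  have closedL: "closed L" unfolding Leq2
    by (intro closed_Collect_le continuous_on_compose2[OF contf] continuous_on_fst continuous_on_snd continuous_on_id) auto
  have Lne: "L \<noteq> {}" unfolding L_def by auto
  have closedK: "closed K" unfolding K_def by simp
  have Kne: "K \<noteq> {}" unfolding K_def using R_pos by auto
  have Lout: "norm z > R" if "z \<in> L" for z
  proof -
    obtain t s where z: "z = (t, s)" by fastforce
    have "f t \<le> s" using that z L_def by auto
    hence "(f t)\<^sup>2 \<le> s\<^sup>2" using f_pos[of t] by (simp add: power_mono)
    hence "R\<^sup>2 < t\<^sup>2 + s\<^sup>2" using f_outside[of t] by linarith
    hence "R < sqrt (t\<^sup>2 + s\<^sup>2)" using R_pos real_less_rsqrt by blast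
    thus ?thesis using z by (simp add: norm_Pair)
  qed
  have eq: "infdist p K = infdist p L" using equidist unfolding p_def K_def L_def .
  have pL: "p \<notin> L"
  proof
    assume "p \<in> L"
    hence "infdist p K = 0" using eq by simp
    hence "p \<in> K" using in_closed_iff_infdist_zero[OF closedK Kne] by simp
    thus False using Lout[OF \<open>p \<in> L\<close>] unfolding K_def by simp
  qed
  have pK: "p \<notin> K"
  proof
    assume "p \<in> K"
    hence "infdist p L = 0" using eq by simp
    hence "p \<in> L" using in_closed_iff_infdist_zero[OF closedL Lne] by simp
    thus False using pL by simp
  qed
  have np: "norm p > R" using pK unfolding K_def by (simp add: dist_norm)
  obtain q where qL: "q \<in> L" and qmin: "\<And>z. z \<in> L \<Longrightarrow> dist p q \<le> dist p z"
    using distance_attains_inf[OF closedL Lne] by blast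
  have dL: "infdist p L = dist p q"
  proof (rule antisym)
    show "infdist p L \<le> dist p q" using infdist_le[OF qL] .
    show "dist p q \<le> infdist p L"
      unfolding infdist_notempty[OF Lne] using Lne qmin by (intro cINF_greatest) auto
  qed
  have dK: "infdist p K = norm p - R"
  proof (rule antisym)
    define w where "w = (R / norm p) *\<^sub>R p"
    have "norm w = R" unfolding w_def using np R_pos by (auto simp: abs_of_pos)
    hence wK: "w \<in> K" unfolding K_def by simp
    have "p - w = (1 - R / norm p) *\<^sub>R p" unfolding w_def by (simp add: algebra_simps)
    hence "dist p w = \<bar>1 - R / norm p\<bar> * norm p" by (simp add: dist_norm)
    also have "\<bar>1 - R / norm p\<bar> = 1 - R / norm p" using np R_pos by (intro abs_of_nonneg) (simp add: divide_le_eq_1)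
    also have "(1 - R / norm p) * norm p = norm p - R" using np R_pos by (auto simp add: field_simps)
    finally have "dist p w = norm p - R" .
    thus "infdist p K \<le> norm p - R" using infdist_le[OF wK, of p] by simp
    show "norm p - R \<le> infdist p K"
      unfolding infdist_notempty[OF Kne]
    proof (intro cINF_greatest[OF Kne])
      fix z assume "z \<in> K"
      hence "norm z \<le> R" unfolding K_def by simp
      moreover have "norm p - norm z \<le> dist p z"
        by (metis dist_norm norm_triangle_ineq2)
      ultimately show "norm p - R \<le> dist p z" by linarith
    qed
  qed
  have dot: "inner (p - q) (z - q) \<le> 0" if "z \<in> L" for z
    using any_closest_point_dot[OF convL closedL qL that] qmin by auto
  obtain a b where q: "q = (a, b)" by fastforce
  have fab: "f a \<le> b" using qL q L_def by auto
  have pq: "p \<noteq> q" using pL qL by auto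
  have A: "y \<le> b"
  proof -
    have "(a, b + 1) \<in> L" using fab L_def by auto
    from dot[OF this] show ?thesis unfolding p_def q by (simp add: inner_Pair)
  qed
  have B: "(x - a) * h + (y - b) * (f (h + a) - b) \<le> 0" for h
  proof -
    have "(h + a, f (h + a)) \<in> L" using L_def by auto
    from dot[OF this] show ?thesis unfolding p_def q by (simp add: inner_Pair)
  qed
  have yb: "y < b"
  proof (rule ccontr)
    assume "\<not> y < b"
    hence yb: "y = b" using A by simp
    have "(x - a) * 1 \<le> 0" using B[of 1] yb by simp
    moreover have "(x - a) * (-1) \<le> 0" using B[of "-1"] yb by simp
    ultimately have "x = a" by simp
    thus False using pq yb unfolding p_def q by simp
  qed
  have bfa: "b = f a"
  proof (rule ccontr)
    assume "b \<noteq> f a"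
    hence "f a < b" using fab by simp
    hence "0 < (y - b) * (f (0 + a) - b)" using yb by (simp add: mult_neg_neg)
    thus False using B[of 0] by simp
  qed
  define g where "g = (\<lambda>h. (x - a) * h + (y - b) * (f (h + a) - b))"
  have gd: "(g has_real_derivative ((x - a) + (y - b) * f' a)) (at 0)"
  proof -
    have "((\<lambda>h. f (h + a)) has_real_derivative f' a) (at 0)"
      using DERIV_shift[of f "f' a" 0 a] f_deriv[of a] by simp
    then show ?thesis unfolding g_def
      by (auto intro!: derivative_eq_intros)
  qed
  have "(x - a) + (y - b) * f' a = 0"
    by (rule DERIV_local_max[OF gd, of 1]) (use B bfa in \<open>auto simp: g_def\<close>)
  define lam where "lam = b - y"
  have lam_pos: "lam > 0" using yb lam_def by simp
  have xe: "x = a + lam * f' a"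
  proof -
    have "x - a = (b - y) * f' a" using \<open>(x - a) + (y - b) * f' a = 0\<close>
      by (simp add: algebra_simps)
    thus ?thesis unfolding lam_def by simp
  qed
  have ye: "y = f a - lam" using lam_def bfa by simp
  define s where "s = sqrt (1 + (f' a)\<^sup>2)"
  have s_pos: "s > 0" unfolding s_def by (simp add: add_pos_nonneg)
  have s2: "s\<^sup>2 = 1 + (f' a)\<^sup>2" unfolding s_def by simp
  have dpq: "dist p q = lam * s"
  proof -
    have "dist p q = sqrt ((lam * f' a)\<^sup>2 + lam\<^sup>2)"
      unfolding p_def q dist_Pair_Pair dist_real_def using xe ye bfa by simp
    also have "(lam * f' a)\<^sup>2 + lam\<^sup>2 = (lam * s)\<^sup>2" using s2 by (simp add: power_mult_distrib algebra_simps)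
    finally show ?thesis using lam_pos s_pos by simp
  qed
  have normp: "norm p = R + lam * s" using eq dK dL dpq by simp
  have "x\<^sup>2 + y\<^sup>2 = (R + lam * s)\<^sup>2"
  proof -
    have "(norm p)\<^sup>2 = x\<^sup>2 + y\<^sup>2" unfolding p_def norm_Pair by simp
    thus ?thesis using normp by simp
  qed
  hence key: "a\<^sup>2 + (f a)\<^sup>2 - R\<^sup>2 = 2 * lam * (R * s - (a * f' a - f a))"
    unfolding xe ye using s2 by (simp add: power2_eq_square algebra_simps)
  have Rs: "R * s - (a * f' a - f a) > 0"
  proof -
    have "a\<^sup>2 + (f a)\<^sup>2 - R\<^sup>2 > 0" using f_outside[of a] by simp
    with key lam_pos show ?thesis by (simp add: zero_less_mult_iff)
  qed
  have alpha: "R - (a * f' a - f a) / s = (R * s - (a * f' a - f a)) / s"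
    using s_pos by (simp add: field_simps)
  have frac: "(a\<^sup>2 + (f a)\<^sup>2 - R\<^sup>2) / (R - (a * f' a - f a) / s) = 2 * lam * s"
    unfolding alpha key using s_pos Rs by (simp add: field_simps)
  show ?thesis
  proof (intro exI[of _ a] conjI)
    show "(a * f' a - f a) / sqrt (1 + (f' a)\<^sup>2) < R"
      using Rs s_pos unfolding s_def[symmetric] by (simp add: field_simps)
    show "dist (x, y) (a, f a) = infdist (x, y) {(t, s). f t \<le> s}"
      using dL bfa unfolding p_def q L_def by simp
    show "x = a + f' a / (2 * sqrt (1 + (f' a)\<^sup>2)) *
                 ((a\<^sup>2 + (f a)\<^sup>2 - R\<^sup>2) / (R - (a * f' a - f a) / sqrt (1 + (f' a)\<^sup>2)))"
      unfolding s_def[symmetric] frac using s_pos xe by (simp add: field_simps)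
    show "y = f a - 1 / (2 * sqrt (1 + (f' a)\<^sup>2)) *
                 ((a\<^sup>2 + (f a)\<^sup>2 - R\<^sup>2) / (R - (a * f' a - f a) / sqrt (1 + (f' a)\<^sup>2)))"
      unfolding s_def[symmetric] frac using s_pos ye by (simp add: field_simps)
  qed
qed

end
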